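(* (i) The solutions $(p,m)\in\mathbb{Z}_{\ge0}\times\mathbb{Z}_{>0}$ of $p^2-mp+\frac{m(m-1)}{6}=0$ with $p\le[\frac m2]$ are precisely the pairs $(p_i,m_i)$, $i\ge1$, defined by $(p_1,m_1)=(0,1)$, $p_{i+1}=m_i-p_i$, $m_{i+1}=5m_i-6p_i+1$. (ii) The solutions $(q,n)\in\mathbb{Z}_{\ge0}\times\mathbb{Z}_{>0}$ of $q^2-2nq+\frac{n(2n-1)}{3}=0$ with $q\le n$ are precisely the pairs $(q_i,n_i)$, $i\ge1$, defined by $(q_1,n_1)=(1,3)$, $q_{i+1}=8n_i-5q_i+1$, $n_{i+1}=19n_i-12q_i+3$. *)

theory Defs
  imports Complex_Main
begin

text \<open>Sequence (p_i, m_i), indexed from i = 1 as in the paper (value at 0 is irrelevant).\<close>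
fun pm_seq :: "nat \<Rightarrow> int \<times> int" where
  "pm_seq 0 = (0, 1)"
| "pm_seq (Suc 0) = (0, 1)"
| "pm_seq (Suc (Suc i)) =
     (let (p, m) = pm_seq (Suc i) in (m - p, 5 * m - 6 * p + 1))"

text \<open>Sequence (q_i, n_i), indexed from i = 1 (value at 0 is irrelevant).\<close>
fun qn_seq :: "nat \<Rightarrow> int \<times> int" where
  "qn_seq 0 = (1, 3)"
| "qn_seq (Suc 0) = (1, 3)"
| "qn_seq (Suc (Suc i)) =
     (let (q, n) = qn_seq (Suc i) in (8 * n - 5 * q + 1, 19 * n - 12 * q + 3))"

end

theory Submission
  imports Defs
begin

lemma eq1_iff:
  "((of_int p :: rat)^2 - of_int m * of_int p + of_int m * (of_int m - 1) / 6 = 0)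
   \<longleftrightarrow> 6*p^2 - 6*m*p + m^2 - m = 0"
proof -
  have "((of_int p :: rat)^2 - of_int m * of_int p + of_int m * (of_int m - 1) / 6 = 0)
      \<longleftrightarrow> (of_int (6*p^2 - 6*m*p + m^2 - m) :: rat) = 0"
    by (simp add: field_simps power2_eq_square)
  then show ?thesis by (simp only: of_int_eq_0_iff)
qed

lemma eq2_iff:
  "((of_int q :: rat)^2 - 2 * of_int n * of_int q + of_int n * (2 * of_int n - 1) / 3 = 0)
   \<longleftrightarrow> 3*q^2 - 6*n*q + 2*n^2 - n = 0"
proof -
  have "((of_int q :: rat)^2 - 2 * of_int n * of_int q + of_int n * (2 * of_int n - 1) / 3 = 0)
      \<longleftrightarrow> (of_int (3*q^2 - 6*n*q + 2*n^2 - n) :: rat) = 0"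
    by (simp add: field_simps power2_eq_square)
  then show ?thesis by (simp only: of_int_eq_0_iff)
qed

lemma div2_iff: "(p::int) \<le> m div 2 \<longleftrightarrow> 2*p \<le> m" by presburger

lemma pm_Suc: "i \<ge> 1 \<Longrightarrow> pm_seq (Suc i) =
   (snd (pm_seq i) - fst (pm_seq i), 5 * snd (pm_seq i) - 6 * fst (pm_seq i) + 1)"
  by (cases i) (auto simp: case_prod_beta Let_def)

lemma qn_Suc: "i \<ge> 1 \<Longrightarrow> qn_seq (Suc i) =
   (8 * snd (qn_seq i) - 5 * fst (qn_seq i) + 1, 19 * snd (qn_seq i) - 12 * fst (qn_seq i) + 3)"
  by (cases i) (auto simp: case_prod_beta Let_def)

definition P1 :: "int \<Rightarrow> int \<Rightarrow> bool" where
  "P1 p m \<longleftrightarrow> 0 \<le> p \<and> 0 < m \<and> 6*p^2 - 6*m*p + m^2 - m = 0 \<and> 2*p \<le> m"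

definition P2 :: "int \<Rightarrow> int \<Rightarrow> bool" where
  "P2 q n \<longleftrightarrow> 0 \<le> q \<and> 0 < n \<and> 3*q^2 - 6*n*q + 2*n^2 - n = 0 \<and> q \<le> n"

lemma A1: "i \<ge> 1 \<Longrightarrow> P1 (fst (pm_seq i)) (snd (pm_seq i))"
proof (induction i rule: dec_induct)
  case base then show ?case by (simp add: P1_def)
next
  case (step k)
  obtain p m where pm: "pm_seq k = (p, m)" by fastforce
  from step.IH pm have h: "0 \<le> p" "0 < m" "6*p^2 - 6*m*p + m^2 - m = 0" "2*p \<le> m"
    by (auto simp: P1_def)
  have e: "6*(m-p)^2 - 6*(5*m-6*p+1)*(m-p) + (5*m-6*p+1)^2 - (5*m-6*p+1)
      = 6*p^2 - 6*m*p + m^2 - m"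
    by (simp add: algebra_simps power2_eq_square)
  show ?case using pm_Suc[OF step.hyps(1)] pm h e by (simp add: P1_def)
qed

lemma A2: "i \<ge> 1 \<Longrightarrow> P2 (fst (qn_seq i)) (snd (qn_seq i))"
proof (induction i rule: dec_induct)
  case base then show ?case by (simp add: P2_def)
next
  case (step k)
  obtain q n where qn: "qn_seq k = (q, n)" by fastforce
  from step.IH qn have h: "0 \<le> q" "0 < n" "3*q^2 - 6*n*q + 2*n^2 - n = 0" "q \<le> n"
    by (auto simp: P2_def)
  have e: "3*(8*n-5*q+1)^2 - 6*(19*n-12*q+3)*(8*n-5*q+1) + 2*(19*n-12*q+3)^2 - (19*n-12*q+3)
      = 3*q^2 - 6*n*q + 2*n^2 - n"
    by (simp add: algebra_simps power2_eq_square)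
  show ?case using qn_Suc[OF step.hyps(1)] qn h e by (simp add: P2_def)
qed


lemma B1: "P1 p m \<Longrightarrow> \<exists>i\<ge>1. pm_seq i = (p, m)"
proof (induction "nat m" arbitrary: p m rule: less_induct)
  case less
  from less.prems have h: "0 \<le> p" "0 < m" "6*p^2 - 6*m*p + m^2 - m = 0" "2*p \<le> m"
    by (auto simp: P1_def)
  show ?case
  proof (cases "m = 1")
    case True
    then have "p = 0" using h by auto
    then show ?thesis using True by (intro exI[of _ 1]) auto
  next
    case False
    then have m1: "m > 1" using h by auto
    have pp: "p > 0"
    proof (rule ccontr)
      assume "\<not> p > 0"
      then have "p = 0" using h by auto
      then have "m * (m - 1) = 0" using h(3) by (simp add: algebra_simps power2_eq_square)
      then show False using m1 by auto
    qed
    define p' where "p' = 5*p+1-m"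
    define m' where "m' = 6*p+1-m"
    have "m' * m = 6*p^2" using h(3) unfolding m'_def by (simp add: algebra_simps power2_eq_square)
    moreover have "6*p^2 > 0" using pp by simp
    ultimately have m'pos: "m' > 0" using h(2) by (metis zero_less_mult_pos2)
    have key: "4*p+1 \<le> m"
    proof (rule ccontr)
      assume "\<not> 4*p+1 \<le> m"
      then have "(4*p-m) * (4*p-3*m) \<le> 0" using h by (intro mult_nonneg_nonpos) auto
      moreover have "16*(6*p^2 - 6*m*p + m^2 - m) = 6*((4*p-m) * (4*p-3*m)) - 2*m^2 - 16*m"
        by (simp add: algebra_simps power2_eq_square)
      ultimately show False using h m1 by (smt (verit) zero_le_power2)
    qed
    have lt: "nat m' < nat m" using key m'_def m'pos by auto
    have e': "6*p'^2 - 6*m'*p' + m'^2 - m' = 0" using h(3) unfolding p'_def m'_def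
      by (simp add: algebra_simps power2_eq_square)
    have "6*p'*p = m'*(m'-1)" using h(3) unfolding p'_def m'_def
      by (simp add: algebra_simps power2_eq_square)
    moreover have "m'*(m'-1) \<ge> 0" using m'pos by simp
    ultimately have "6*p'*p \<ge> 0" by simp
    then have p'nn: "p' \<ge> 0" using pp by (simp add: zero_le_mult_iff)
    have "P1 p' m'" unfolding P1_def using e' p'nn m'pos key p'_def m'_def by auto
    then obtain i where i: "i \<ge> 1" "pm_seq i = (p', m')" using less.hyps[OF lt] by blast
    have "pm_seq (Suc i) = (p, m)" using pm_Suc[OF i(1)] i(2) p'_def m'_def by simp
    then show ?thesis by (intro exI[of _ "Suc i"]) auto
  qed
qed


lemma B2: "P2 q n \<Longrightarrow> \<exists>i\<ge>1. qn_seq i = (q, n)"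
proof (induction "nat n" arbitrary: q n rule: less_induct)
  case less
  from less.prems have h: "0 \<le> q" "0 < n" "3*q^2 - 6*n*q + 2*n^2 - n = 0" "q \<le> n"
    by (auto simp: P2_def)
  show ?case
  proof (cases "n \<le> 3")
    case True
    then have "n = 1 \<or> n = 2 \<or> n = 3" using h by auto
    moreover have "q = 0 \<or> q = 1 \<or> q = 2 \<or> q = 3" using h True by auto
    ultimately have "q = 1 \<and> n = 3" using h(3) by (auto simp: power2_eq_square)
    then show ?thesis by (intro exI[of _ 1]) auto
  next
    case False
    then have n3: "n > 3" by simp
    define q' where "q' = 19*q-8*n+5"
    define n' where "n' = 12*q-5*n+3"
    have n'pos: "n' > 0"
    proof (rule ccontr)
      assume a: "\<not> n' > 0"
      define X where "X = (12*q-5*n+3) * (12*q-19*n-3)"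
      define Y where "Y = (n-3)^2"
      have "X \<ge> 0" unfolding X_def using a h n'_def by (intro mult_nonpos_nonpos) auto
      moreover have "144*(3*q^2 - 6*n*q + 2*n^2 - n) = 3*Y + 3*X"
        unfolding X_def Y_def by (simp add: algebra_simps power2_eq_square)
      moreover have "Y > 0" unfolding Y_def using n3 by simp
      ultimately have "3*Y + 3*X = 0" using h(3) by simp
      then show False using \<open>X \<ge> 0\<close> \<open>Y > 0\<close> by linarith
    qed
    have lt2: "4*q < 2*n-1"
    proof (rule ccontr)
      assume a: "\<not> 4*q < 2*n-1"
      define X where "X = (4*q-2*n+1) * (4*q-6*n-1)"
      define Y where "Y = n^2"
      have "X \<le> 0" unfolding X_def using a h by (intro mult_nonneg_nonpos) auto
      moreover have "16*(3*q^2 - 6*n*q + 2*n^2 - n) = -4*Y-4*n+3 + 3*X"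
        unfolding X_def Y_def by (simp add: algebra_simps power2_eq_square)
      moreover have "Y \<ge> 0" unfolding Y_def by simp
      ultimately have "-4*Y-4*n+3 + 3*X = 0" using h(3) by simp
      then show False using \<open>X \<le> 0\<close> \<open>Y \<ge> 0\<close> h(2) by linarith
    qed
    have lt4: "7*q \<le> 3*n-2"
    proof (rule ccontr)
      assume a: "\<not> 7*q \<le> 3*n-2"
      define X where "X = (7*q-3*n+2) * (7*q-11*n-2)"
      define Y where "Y = n^2"
      have "X \<le> 0" unfolding X_def using a h by (intro mult_nonneg_nonpos) auto
      moreover have "49*(3*q^2 - 6*n*q + 2*n^2 - n) = -Y-n+12 + 3*X"
        unfolding X_def Y_def by (simp add: algebra_simps power2_eq_square)
      moreover have "Y \<ge> 4*n" unfolding Y_def using n3 by (simp add: power2_eq_square)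
      ultimately have "-Y-n+12 + 3*X = 0" using h(3) by simp
      then show False using \<open>X \<le> 0\<close> \<open>Y \<ge> 4*n\<close> n3 by linarith
    qed
    have e': "3*q'^2 - 6*n'*q' + 2*n'^2 - n' = 0" using h(3) unfolding q'_def n'_def
      by (simp add: algebra_simps power2_eq_square)
    have q'nn: "q' \<ge> 0"
    proof (rule ccontr)
      assume a: "\<not> q' \<ge> 0"
      have "3*q'*(2*n'-q') = n'*(2*n'-1)" using e' by (simp add: algebra_simps power2_eq_square)
      moreover have "n'*(2*n'-1) > 0" using n'pos by simp
      moreover have "q'*(2*n'-q') < 0" using a n'pos by (intro mult_neg_pos) auto
      ultimately show False by linarith
    qed
    have lt: "nat n' < nat n" using lt2 n'_def n'pos by auto
    have "P2 q' n'" unfolding P2_def using e' q'nn n'pos lt4 q'_def n'_def by auto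
    then obtain i where i: "i \<ge> 1" "qn_seq i = (q', n')" using less.hyps[OF lt] by blast
    have "qn_seq (Suc i) = (q, n)" using qn_Suc[OF i(1)] i(2) q'_def n'_def by simp
    then show ?thesis by (intro exI[of _ "Suc i"]) auto
  qed
qed

theorem lemma3p5:
  shows "({(p::int, m::int). 0 \<le> p \<and> 0 < m \<and>
            (of_int p :: rat)^2 - of_int m * of_int p + of_int m * (of_int m - 1) / 6 = 0 \<and>
            p \<le> m div 2}
         = {pm_seq i | i. i \<ge> 1}) \<and>
         ({(q::int, n::int). 0 \<le> q \<and> 0 < n \<and>
            (of_int q :: rat)^2 - 2 * of_int n * of_int q + of_int n * (2 * of_int n - 1) / 3 = 0 \<and>
            q \<le> n}
         = {qn_seq i | i. i \<ge> 1})"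
proof (rule conjI)
  have S: "{(p::int, m::int). 0 \<le> p \<and> 0 < m \<and>
            (of_int p :: rat)^2 - of_int m * of_int p + of_int m * (of_int m - 1) / 6 = 0 \<and>
            p \<le> m div 2} = {(p, m). P1 p m}"
    by (auto simp: P1_def eq1_iff div2_iff)
  show "{(p::int, m::int). 0 \<le> p \<and> 0 < m \<and>
            (of_int p :: rat)^2 - of_int m * of_int p + of_int m * (of_int m - 1) / 6 = 0 \<and>
            p \<le> m div 2} = {pm_seq i | i. i \<ge> 1}"
    unfolding S
  proof (intro equalityI subsetI)
    fix x assume "x \<in> {(p, m). P1 p m}"
    then obtain a b where "x = (a, b)" "P1 a b" by auto
    then obtain i where "i \<ge> 1" "pm_seq i = (a, b)" using B1 by blast
    then show "x \<in> {pm_seq i | i. i \<ge> 1}" using \<open>x = (a, b)\<close> by force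
  next
    fix x assume "x \<in> {pm_seq i | i. i \<ge> 1}"
    then obtain i where "i \<ge> 1" "x = pm_seq i" by blast
    then show "x \<in> {(p, m). P1 p m}" using A1[of i] by (cases x) auto
  qed
next
  have S: "{(q::int, n::int). 0 \<le> q \<and> 0 < n \<and>
            (of_int q :: rat)^2 - 2 * of_int n * of_int q + of_int n * (2 * of_int n - 1) / 3 = 0 \<and>
            q \<le> n} = {(q, n). P2 q n}"
    by (auto simp: P2_def eq2_iff)
  show "{(q::int, n::int). 0 \<le> q \<and> 0 < n \<and>
            (of_int q :: rat)^2 - 2 * of_int n * of_int q + of_int n * (2 * of_int n - 1) / 3 = 0 \<and>
            q \<le> n} = {qn_seq i | i. i \<ge> 1}"
    unfolding S
  proof (intro equalityI subsetI)
    fix x assume "x \<in> {(q, n). P2 q n}"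
    then obtain a b where "x = (a, b)" "P2 a b" by auto
    then obtain i where "i \<ge> 1" "qn_seq i = (a, b)" using B2 by blast
    then show "x \<in> {qn_seq i | i. i \<ge> 1}" using \<open>x = (a, b)\<close> by force
  next
    fix x assume "x \<in> {qn_seq i | i. i \<ge> 1}"
    then obtain i where "i \<ge> 1" "x = qn_seq i" by blast
    then show "x \<in> {(q, n). P2 q n}" using A2[of i] by (cases x) auto
  qed
qed

end
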